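(* Let $X$ be a shift space. For every $n\ge1$ and $m\ge0$, the graph $\mathcal E_n(w)$ is a tree for all $w\in\mathcal L_{\ge m}(X)$ if and only if the graph $\mathcal E_{n+1}(w)$ is a tree for all $w\in\mathcal L_{\ge m}(X)$.
   Context: $A$ is a finite alphabet; a shift space is a closed shift-invariant subset $X\subseteq A^{\mathbb Z}$; $\mathcal L(X)$ is its set of finite factors, $\mathcal L_n(X)=\mathcal L(X)\cap A^n$, $\mathcal L_{\ge n}(X)=\bigcup_{k\ge n}\mathcal L_k(X)$. For $w\in\mathcal L(X)$ and $n\ge1$: $L_n(w)=\{u\in\mathcal L_n(X):uw\in\mathcal L(X)\}$, $R_n(w)=\{v\in\mathcal L_n(X):wv\in\mathcal L(X)\}$, and the extension graph $\mathcal E_n(w)$ is the undirected bipartite graph with vertex set the disjoint union of $L_n(w)$ and $R_n(w)$ and an edge $(u,v)$ iff $uwv\in\mathcal L(X)$. *)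

theory Defs
  imports Main
begin

definition shift :: "(int \<Rightarrow> 'a) \<Rightarrow> (int \<Rightarrow> 'a)" where
  "shift x = (\<lambda>i. x (i + 1))"

text \<open>Closedness in the product topology of discrete A (the cylinder-set neighbourhoods
  {y. y agrees with x on [-N,N]} form a neighbourhood base at x).\<close>

definition closed_shift :: "(int \<Rightarrow> 'a) set \<Rightarrow> bool" where
  "closed_shift X \<longleftrightarrow>
     (\<forall>x. (\<forall>N::nat. \<exists>y\<in>X. \<forall>i. \<bar>i\<bar> \<le> int N \<longrightarrow> y i = x i) \<longrightarrow> x \<in> X)"

definition shift_space :: "(int \<Rightarrow> 'a::finite) set \<Rightarrow> bool" where
  "shift_space X \<longleftrightarrow> closed_shift X \<and> shift ` X = X"

definition factor :: "(int \<Rightarrow> 'a) \<Rightarrow> int \<Rightarrow> nat \<Rightarrow> 'a list" where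
  "factor x i n = map (\<lambda>k. x (i + int k)) [0..<n]"

definition lang :: "(int \<Rightarrow> 'a) set \<Rightarrow> 'a list set" where
  "lang X = {w. \<exists>x\<in>X. \<exists>i. w = factor x i (length w)}"

definition lang_n :: "(int \<Rightarrow> 'a) set \<Rightarrow> nat \<Rightarrow> 'a list set" where
  "lang_n X n = {w \<in> lang X. length w = n}"

definition lang_ge :: "(int \<Rightarrow> 'a) set \<Rightarrow> nat \<Rightarrow> 'a list set" where
  "lang_ge X n = {w \<in> lang X. n \<le> length w}"

definition left_ext :: "(int \<Rightarrow> 'a) set \<Rightarrow> nat \<Rightarrow> 'a list \<Rightarrow> 'a list set" where
  "left_ext X n w = {u \<in> lang_n X n. u @ w \<in> lang X}"

definition right_ext :: "(int \<Rightarrow> 'a) set \<Rightarrow> nat \<Rightarrow> 'a list \<Rightarrow> 'a list set" where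
  "right_ext X n w = {v \<in> lang_n X n. w @ v \<in> lang X}"

definition ext_vertices :: "(int \<Rightarrow> 'a) set \<Rightarrow> nat \<Rightarrow> 'a list \<Rightarrow> ('a list + 'a list) set" where
  "ext_vertices X n w = Inl ` left_ext X n w \<union> Inr ` right_ext X n w"

definition ext_adj :: "(int \<Rightarrow> 'a) set \<Rightarrow> nat \<Rightarrow> 'a list \<Rightarrow> ('a list + 'a list) \<Rightarrow> ('a list + 'a list) \<Rightarrow> bool" where
  "ext_adj X n w p q \<longleftrightarrow> p \<in> ext_vertices X n w \<and> q \<in> ext_vertices X n w \<and>
     ((\<exists>u v. p = Inl u \<and> q = Inr v \<and> u @ w @ v \<in> lang X) \<or>
      (\<exists>u v. p = Inr v \<and> q = Inl u \<and> u @ w @ v \<in> lang X))"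

definition graph_connected :: "'v set \<Rightarrow> ('v \<Rightarrow> 'v \<Rightarrow> bool) \<Rightarrow> bool" where
  "graph_connected V E \<longleftrightarrow>
     (\<forall>p\<in>V. \<forall>q\<in>V. (p, q) \<in> {(a, b). a \<in> V \<and> b \<in> V \<and> E a b}\<^sup>*)"

definition is_cycle :: "'v set \<Rightarrow> ('v \<Rightarrow> 'v \<Rightarrow> bool) \<Rightarrow> 'v list \<Rightarrow> bool" where
  "is_cycle V E cs \<longleftrightarrow> 3 \<le> length cs \<and> distinct cs \<and> set cs \<subseteq> V \<and>
     (\<forall>i. Suc i < length cs \<longrightarrow> E (cs ! i) (cs ! Suc i)) \<and> E (last cs) (hd cs)"

definition graph_acyclic :: "'v set \<Rightarrow> ('v \<Rightarrow> 'v \<Rightarrow> bool) \<Rightarrow> bool" where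
  "graph_acyclic V E \<longleftrightarrow> (\<nexists>cs. is_cycle V E cs)"

definition is_tree :: "'v set \<Rightarrow> ('v \<Rightarrow> 'v \<Rightarrow> bool) \<Rightarrow> bool" where
  "is_tree V E \<longleftrightarrow> V \<noteq> {} \<and> graph_connected V E \<and> graph_acyclic V E"

definition ext_graph_is_tree :: "(int \<Rightarrow> 'a) set \<Rightarrow> nat \<Rightarrow> 'a list \<Rightarrow> bool" where
  "ext_graph_is_tree X n w = is_tree (ext_vertices X n w) (ext_adj X n w)"

end

theory Submission
  imports Defs
begin


definition Dg :: "'v set \<Rightarrow> ('v \<Rightarrow> 'v \<Rightarrow> bool) \<Rightarrow> ('v \<times> 'v) set" where
  "Dg V E = {(a, b). a \<in> V \<and> b \<in> V \<and> E a b}"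

lemma hom_rtrancl:
  assumes "(a, b) \<in> R\<^sup>*" and "\<And>x y. (x, y) \<in> R \<Longrightarrow> (f x, f y) \<in> S\<^sup>*"
  shows "(f a, f b) \<in> S\<^sup>*"
  using assms(1)
proof (induction rule: rtrancl_induct)
  case base then show ?case by simp
next
  case (step y z) then show ?case using assms(2) by (meson rtrancl_trans)
qed

lemma rtrancl_sym_rev:
  assumes "\<And>x y. (x, y) \<in> R \<Longrightarrow> (y, x) \<in> R" and "(a, b) \<in> R\<^sup>*"
  shows "(b, a) \<in> R\<^sup>*"
  using assms(2)
proof (induction rule: rtrancl_induct)
  case base then show ?case by simp
next
  case (step y z) then show ?case using assms(1) by (meson converse_rtrancl_into_rtrancl)
qed

lemma conn_card:
  assumes fin: "finite V" and ne: "V \<noteq> {}" and con: "graph_connected V E"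
    and sym: "\<And>x y. E x y \<Longrightarrow> E y x"
  shows "2 * card V \<le> card (Dg V E) + 2"
proof -
  let ?R = "Dg V E"
  have Rdef: "{(a, b). a \<in> V \<and> b \<in> V \<and> E a b} = ?R" by (simp add: Dg_def)
  obtain r where r: "r \<in> V" using ne by auto
  have reach: "\<exists>k. (r, v) \<in> ?R ^^ k" if "v \<in> V" for v
    using con r that unfolding graph_connected_def Rdef by (simp add: rtrancl_power)
  define d where "d v = (LEAST k. (r, v) \<in> ?R ^^ k)" for v
  have dI: "(r, v) \<in> ?R ^^ d v" if "v \<in> V" for v
    using reach[OF that] unfolding d_def by (meson LeastI_ex)
  have dL: "d v \<le> k" if "(r, v) \<in> ?R ^^ k" for v k
    using that unfolding d_def by (simp add: Least_le)
  have par: "\<exists>u. (u, v) \<in> ?R \<and> d u < d v" if "v \<in> V" "v \<noteq> r" for v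
  proof -
    have "d v \<noteq> 0" using dI[OF that(1)] that(2) by (metis relpow_0_E)
    then obtain k where k: "d v = Suc k" by (cases "d v") auto
    then have "(r, v) \<in> ?R ^^ k O ?R" using dI[OF that(1)] by simp
    then obtain u where "(r, u) \<in> ?R ^^ k" "(u, v) \<in> ?R" by blast
    then show ?thesis using dL k by fastforce
  qed
  define p where "p v = (SOME u. (u, v) \<in> ?R \<and> d u < d v)" for v
  have pP: "(p v, v) \<in> ?R \<and> d (p v) < d v" if "v \<in> V" "v \<noteq> r" for v
    unfolding p_def using someI_ex[OF par[OF that]] .
  let ?A = "V - {r}"
  have i1: "inj_on (\<lambda>v. (v, p v)) ?A" by (auto intro: inj_onI)
  have i2: "inj_on (\<lambda>v. (p v, v)) ?A" by (auto intro: inj_onI)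
  have s1: "(\<lambda>v. (v, p v)) ` ?A \<subseteq> ?R"
    using pP sym by (auto simp: Dg_def)
  have s2: "(\<lambda>v. (p v, v)) ` ?A \<subseteq> ?R"
    using pP by auto
  have dj: "(\<lambda>v. (v, p v)) ` ?A \<inter> (\<lambda>v. (p v, v)) ` ?A = {}"
  proof (rule ccontr)
    assume "\<not> ?thesis"
    then obtain v v' where "v \<in> ?A" "v' \<in> ?A" "(v, p v) = (p v', v')" by blast
    then show False using pP by (metis Diff_iff insert_iff not_less_iff_gr_or_eq prod.inject)
  qed
  have finR: "finite ?R"
    by (rule finite_subset[of _ "V \<times> V"]) (auto simp: Dg_def fin)
  have "card ((\<lambda>v. (v, p v)) ` ?A \<union> (\<lambda>v. (p v, v)) ` ?A) \<le> card ?R"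
    using s1 s2 finR by (intro card_mono) auto
  moreover have "card ((\<lambda>v. (v, p v)) ` ?A \<union> (\<lambda>v. (p v, v)) ` ?A) = 2 * card ?A"
    using dj i1 i2 fin by (simp add: card_Un_disjoint card_image)
  moreover have "card ?A = card V - 1" using r fin by simp
  moreover have "card V > 0" using r fin by (auto simp: card_gt_0_iff)
  ultimately show ?thesis by linarith
qed

lemma leaf_exists:
  assumes fin: "finite V" and wf: "\<And>x y. E x y \<Longrightarrow> x \<in> V \<and> y \<in> V"
    and sym: "\<And>x y. E x y \<Longrightarrow> E y x" and irr: "\<And>x. \<not> E x x"
    and ac: "graph_acyclic V E" and ed: "E a b"
  shows "\<exists>x y. E x y \<and> (\<forall>z. E x z \<longrightarrow> z = y)"
proof -
  define P where "P = {ps. distinct ps \<and> set ps \<subseteq> V \<and> 2 \<le> length ps \<and>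
       (\<forall>i. Suc i < length ps \<longrightarrow> E (ps ! i) (ps ! Suc i))}"
  have finP: "finite P"
    by (rule finite_subset[OF _ finite_subset_distinct[OF fin]]) (auto simp: P_def)
  have "[a, b] \<in> P" using ed wf irr unfolding P_def
    by (auto simp: less_Suc_eq nth_Cons split: nat.splits)
  then have neP: "P \<noteq> {}" by auto
  have "Max (length ` P) \<in> length ` P" using finP neP by (intro Max_in) auto
  then obtain ps where ps: "ps \<in> P" "length ps = Max (length ` P)" by force
  have maxl: "length qs \<le> length ps" if "qs \<in> P" for qs
    using ps(2) finP that by simp
  define n where "n = length ps"
  have n2: "2 \<le> n" using ps(1) by (simp add: P_def n_def)
  define x where "x = ps ! (n - 1)"
  define y where "y = ps ! (n - 2)"
  have all: "\<forall>i. Suc i < n \<longrightarrow> E (ps!i) (ps!Suc i)" using ps(1) by (simp add: P_def n_def)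
  have "Suc (n - 2) = n - 1" "Suc (n-2) < n" using n2 by arith+
  then have Eyx: "E y x" using all unfolding x_def y_def by metis
  have lastx: "last ps = x" using n2 unfolding x_def n_def
    by (metis last_conv_nth list.size(3) not_numeral_le_zero)
  have "\<forall>z. E x z \<longrightarrow> z = y"
  proof (intro allI impI, rule ccontr)
    fix z assume Exz: "E x z" and zy: "z \<noteq> y"
    show False
    proof (cases "z \<in> set ps")
      case False
      have "\<forall>i. Suc i < length (ps @ [z]) \<longrightarrow> E ((ps @ [z]) ! i) ((ps @ [z]) ! Suc i)"
      proof (intro allI impI)
        fix i assume "Suc i < length (ps @ [z])"
        then have "Suc i < n \<or> Suc i = n" by (simp add: n_def) linarith
        then show "E ((ps @ [z]) ! i) ((ps @ [z]) ! Suc i)"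
        proof
          assume "Suc i < n" then show ?thesis using all by (simp add: nth_append n_def)
        next
          assume a: "Suc i = n"
          then have "i = n - 1" by simp
          then show ?thesis using a Exz by (simp add: nth_append n_def x_def)
        qed
      qed
      moreover have "distinct (ps @ [z])" using ps(1) False by (simp add: P_def)
      moreover have "set (ps @ [z]) \<subseteq> V" using ps(1) wf[OF Exz] by (simp add: P_def)
      moreover have "2 \<le> length (ps @ [z])" using n2 by (simp add: n_def)
      ultimately have "ps @ [z] \<in> P" unfolding P_def by blast
      then show False using maxl by fastforce
    next
      case True
      then obtain j where j: "j < n" "ps ! j = z" by (metis in_set_conv_nth n_def)
      have "j \<noteq> n - 1" using j irr Exz x_def by auto
      moreover have "j \<noteq> n - 2" using j zy y_def by auto
      ultimately have j3: "j + 3 \<le> n" using j(1) n2 by linarith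
      define cs where "cs = drop j ps"
      have "is_cycle V E cs"
        unfolding is_cycle_def
      proof (intro conjI)
        show "3 \<le> length cs" using j3 by (simp add: cs_def n_def)
        show "distinct cs" using ps(1) by (simp add: cs_def P_def)
        show "set cs \<subseteq> V" using ps(1) set_drop_subset[of j ps] by (auto simp: cs_def P_def)
        show "\<forall>i. Suc i < length cs \<longrightarrow> E (cs ! i) (cs ! Suc i)"
          using ps(1) by (auto simp: cs_def P_def n_def)
        have "last cs = x" using lastx j3 by (simp add: cs_def n_def)
        moreover have "hd cs = z" using j by (simp add: cs_def n_def hd_drop_conv_nth)
        ultimately show "E (last cs) (hd cs)" using Exz by simp
      qed
      then show False using ac by (auto simp: graph_acyclic_def)
    qed
  qed
  then show ?thesis using sym[OF Eyx] by blast
qed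

lemma is_cycle_mono:
  assumes "is_cycle V' E' cs" and "\<And>x y. E' x y \<Longrightarrow> E x y" and "V' \<subseteq> V"
  shows "is_cycle V E cs"
proof -
  have "set cs \<subseteq> V" using assms(1,3) unfolding is_cycle_def by blast
  then show ?thesis using assms(1) assms(2)[of "last cs" "hd cs"] assms(2) unfolding is_cycle_def by simp
qed

lemma acyc_card:
  assumes "finite V" and "V \<noteq> {}" and "\<And>x y. E x y \<Longrightarrow> x \<in> V \<and> y \<in> V"
    and "\<And>x y. E x y \<Longrightarrow> E y x" and "\<And>x. \<not> E x x"
    and "graph_acyclic V E"
  shows "card (Dg V E) + 2 \<le> 2 * card V"
  using assms
proof (induction "card V" arbitrary: V E rule: less_induct)
  case less
  show ?case
  proof (cases "\<exists>a b. E a b")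
    case False
    then have "Dg V E = {}" by (auto simp: Dg_def)
    moreover have "card V > 0" using less.prems(1,2) by (auto simp: card_gt_0_iff)
    ultimately show ?thesis by simp
  next
    case True
    then obtain a b where ab: "E a b" by blast
    obtain x y where xy: "E x y" "\<forall>z. E x z \<longrightarrow> z = y"
      using leaf_exists[OF less.prems(1,3,4,5,6) ab] by blast
    define V' where "V' = V - {x}"
    define E' where "E' = (\<lambda>p q. E p q \<and> p \<noteq> x \<and> q \<noteq> x)"
    have xV: "x \<in> V" and yV: "y \<in> V" using less.prems(3) xy(1) by auto
    have xny: "x \<noteq> y" using less.prems(5) xy(1) by auto
    have cV: "card V' < card V" using xV less.prems(1) by (simp add: V'_def) (metis card_gt_0_iff diff_less empty_iff zero_less_one One_nat_def)
    have "card (Dg V' E') + 2 \<le> 2 * card V'"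
    proof (rule less.hyps[OF cV])
      show "finite V'" using less.prems(1) by (simp add: V'_def)
      show "V' \<noteq> {}" using yV xny by (auto simp: V'_def)
      show "\<And>p q. E' p q \<Longrightarrow> p \<in> V' \<and> q \<in> V'" using less.prems(3) by (auto simp: E'_def V'_def)
      show "\<And>p q. E' p q \<Longrightarrow> E' q p" using less.prems(4) by (auto simp: E'_def)
      show "\<And>p. \<not> E' p p" using less.prems(5) by (auto simp: E'_def)
      show "graph_acyclic V' E'"
        unfolding graph_acyclic_def
      proof
        assume "\<exists>cs. is_cycle V' E' cs"
        then obtain cs where "is_cycle V' E' cs" by blast
        then have "is_cycle V E cs" by (rule is_cycle_mono) (auto simp: E'_def V'_def)
        then show False using less.prems(6) by (auto simp: graph_acyclic_def)
      qed
    qed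
    have xy2: "\<forall>z. E z x \<longrightarrow> z = y" using xy(2) less.prems(4) by blast
    have "Dg V' E' = Dg V E - {(x, y), (y, x)}"
      using xy(2) xy2 by (auto simp: Dg_def V'_def E'_def)
    moreover have "(x, y) \<in> Dg V E" "(y, x) \<in> Dg V E"
      using xy(1) xV yV less.prems(4)[OF xy(1)] by (auto simp: Dg_def)
    moreover have "finite (Dg V E)"
      by (rule finite_subset[of _ "V \<times> V"]) (auto simp: Dg_def less.prems(1))
    moreover have "card V' = card V - 1" using xV less.prems(1) by (simp add: V'_def)
    moreover have "card V > 0" using xV less.prems(1) by (auto simp: card_gt_0_iff)
    ultimately have "card (Dg V' E') = card (Dg V E) - 2" using xny
      by (simp add: card_Diff_subset)
    moreover have "card (Dg V E) \<ge> 2" using \<open>(x, y) \<in> Dg V E\<close> \<open>(y, x) \<in> Dg V E\<close> xny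
       \<open>finite (Dg V E)\<close> card_mono[of "Dg V E" "{(x,y),(y,x)}"] by auto
    ultimately show ?thesis using \<open>card V' = card V - 1\<close> \<open>card V > 0\<close>
      \<open>card (Dg V' E') + 2 \<le> 2 * card V'\<close> by linarith
  qed
qed


lemma Dg_fin: "finite V \<Longrightarrow> finite (Dg V E)"
  by (rule finite_subset[of _ "V \<times> V"]) (auto simp: Dg_def)

lemma cycle_contra:
  assumes fin: "finite V" and sym: "\<And>x y. E x y \<Longrightarrow> E y x"
    and con: "graph_connected V E" and cnt: "card (Dg V E) + 2 = 2 * card V"
    and cyc: "is_cycle V E cs"
  shows False
proof -
  define a where "a = cs ! 0"
  define b where "b = cs ! 1"
  define E' where "E' = (\<lambda>p q. E p q \<and> \<not> (p = a \<and> q = b) \<and> \<not> (p = b \<and> q = a))"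
  let ?R = "Dg V E" and ?R' = "Dg V E'"
  have len: "3 \<le> length cs" and dis: "distinct cs" and sV: "set cs \<subseteq> V"
    and adj: "\<And>i. Suc i < length cs \<Longrightarrow> E (cs ! i) (cs ! Suc i)" and lh: "E (last cs) (hd cs)"
    using cyc unfolding is_cycle_def by auto
  have cne: "cs \<noteq> []" using len by auto
  have inV: "cs ! i \<in> V" if "i < length cs" for i using sV that nth_mem by blast
  have neq: "cs ! i = cs ! j \<longleftrightarrow> i = j" if "i < length cs" "j < length cs" for i j
    using dis that by (simp add: nth_eq_iff_index_eq)
  have path: "(b, cs ! i) \<in> ?R'\<^sup>*" if "1 \<le> i" "i < length cs" for i
    using that
  proof (induction i)
    case 0 then show ?case by simp
  next
    case (Suc i)
    show ?case
    proof (cases "i = 0")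
      case True then show ?thesis by (simp add: b_def)
    next
      case False
      then have IH: "(b, cs ! i) \<in> ?R'\<^sup>*" using Suc by simp
      have e: "E (cs ! i) (cs ! Suc i)" using adj Suc.prems by simp
      have n1: "cs ! i \<noteq> a" using neq[of i 0] False Suc.prems len unfolding a_def by (metis Suc_lessD gr0I less_trans)
      have n2: "cs ! Suc i \<noteq> a" using neq[of "Suc i" 0] Suc.prems unfolding a_def by (metis gr0I less_trans nat.distinct(1))
      have "(cs ! i, cs ! Suc i) \<in> ?R'"
        using e n1 n2 inV Suc.prems by (simp add: Dg_def E'_def)
      then show ?thesis using IH by (rule rtrancl_into_rtrancl[rotated])
    qed
  qed
  have lastn: "last cs = cs ! (length cs - 1)" and hdn: "hd cs = cs ! 0"
    using len by (metis One_nat_def last_conv_nth list.size(3) not_numeral_le_zero,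
        metis hd_conv_nth list.size(3) not_numeral_le_zero)
  have l1: "cs ! (length cs - 1) \<noteq> a" using neq[of "length cs - 1" 0] len cne by (simp add: a_def)
  have l2: "cs ! (length cs - 1) \<noteq> b" using neq[of "length cs - 1" 1] len cne by (simp add: b_def)
  have "(cs ! (length cs - 1), a) \<in> ?R'"
    using lh lastn hdn l1 l2 inV[of 0] inV[of "length cs - 1"] len cne by (simp add: Dg_def E'_def a_def)
  moreover have "(b, cs ! (length cs - 1)) \<in> ?R'\<^sup>*" using path len by simp
  ultimately have ba: "(b, a) \<in> ?R'\<^sup>*" by (rule rtrancl_into_rtrancl[rotated])
  have symR': "\<And>x y. (x, y) \<in> ?R' \<Longrightarrow> (y, x) \<in> ?R'"
    using sym by (auto simp: Dg_def E'_def)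
  have ab: "(a, b) \<in> ?R'\<^sup>*" using rtrancl_sym_rev[OF symR' ba] .
  have "?R \<subseteq> ?R'\<^sup>*"
  proof
    fix pq assume "pq \<in> ?R"
    then obtain p q where pq: "pq = (p, q)" "p \<in> V" "q \<in> V" "E p q" by (auto simp: Dg_def)
    show "pq \<in> ?R'\<^sup>*"
    proof (cases "(p = a \<and> q = b) \<or> (p = b \<and> q = a)")
      case True then show ?thesis using ab ba pq(1) by auto
    next
      case False then have "pq \<in> ?R'" using pq by (simp add: Dg_def E'_def)
      then show ?thesis by (simp add: r_into_rtrancl)
    qed
  qed
  then have sub: "?R\<^sup>* \<subseteq> ?R'\<^sup>*" by (rule rtrancl_subset_rtrancl)
  have con': "graph_connected V E'"
    using con sub unfolding graph_connected_def Dg_def by blast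
  have "V \<noteq> {}" using inV[of 0] cne by auto
  have E'sym: "\<And>x y. E' x y \<Longrightarrow> E' y x" using sym by (auto simp: E'_def)
  have c1: "2 * card V \<le> card ?R' + 2" by (rule conn_card[OF fin \<open>V \<noteq> {}\<close> con' E'sym])
  have abR: "(a, b) \<in> ?R" "(b, a) \<in> ?R"
    using adj[of 0] sym[OF adj[of 0]] len inV[of 0] inV[of 1] cne by (auto simp: Dg_def a_def b_def)
  have anb: "a \<noteq> b" using neq[of 0 1] len cne by (simp add: a_def b_def)
  have "?R' = ?R - {(a, b), (b, a)}" by (auto simp: Dg_def E'_def)
  then have "card ?R' = card ?R - 2" using abR anb Dg_fin[OF fin] by (simp add: card_Diff_subset)
  moreover have "card ?R \<ge> 2" using abR anb Dg_fin[OF fin, of E] card_mono[of "?R" "{(a,b),(b,a)}"] by auto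
  ultimately show False using c1 cnt by linarith
qed

lemma tree_iff:
  assumes fin: "finite V" and wf: "\<And>x y. E x y \<Longrightarrow> x \<in> V \<and> y \<in> V"
    and sym: "\<And>x y. E x y \<Longrightarrow> E y x" and irr: "\<And>x. \<not> E x x"
  shows "is_tree V E \<longleftrightarrow> V \<noteq> {} \<and> graph_connected V E \<and> card (Dg V E) + 2 = 2 * card V"
proof
  assume t: "is_tree V E"
  then have "V \<noteq> {}" "graph_connected V E" "graph_acyclic V E" by (auto simp: is_tree_def)
  then show "V \<noteq> {} \<and> graph_connected V E \<and> card (Dg V E) + 2 = 2 * card V"
    using conn_card[OF fin \<open>V \<noteq> {}\<close> \<open>graph_connected V E\<close> sym]
      acyc_card[OF fin \<open>V \<noteq> {}\<close> wf sym irr \<open>graph_acyclic V E\<close>] by linarith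
next
  assume h: "V \<noteq> {} \<and> graph_connected V E \<and> card (Dg V E) + 2 = 2 * card V"
  have "graph_acyclic V E"
    unfolding graph_acyclic_def
  proof
    assume "\<exists>cs. is_cycle V E cs"
    then obtain cs where cs: "is_cycle V E cs" by blast
    show False using h cycle_contra[OF fin sym _ _ cs] by blast
  qed
  then show "is_tree V E" using h by (simp add: is_tree_def)
qed



definition factorial :: "'a list set \<Rightarrow> bool" where
  "factorial Lg \<longleftrightarrow> (\<forall>u v. u @ v \<in> Lg \<longrightarrow> u \<in> Lg \<and> v \<in> Lg)"
definition extendable :: "'a list set \<Rightarrow> bool" where
  "extendable Lg \<longleftrightarrow> (\<forall>w\<in>Lg. (\<exists>a. a # w \<in> Lg) \<and> (\<exists>a. w @ [a] \<in> Lg))"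

definition lv :: "'a list set \<Rightarrow> nat \<Rightarrow> 'a list \<Rightarrow> 'a list set" where
  "lv Lg p w = {u. length u = p \<and> u @ w \<in> Lg}"
definition rv :: "'a list set \<Rightarrow> nat \<Rightarrow> 'a list \<Rightarrow> 'a list set" where
  "rv Lg q w = {v. length v = q \<and> w @ v \<in> Lg}"
definition ed :: "'a list set \<Rightarrow> nat \<Rightarrow> nat \<Rightarrow> 'a list \<Rightarrow> ('a list \<times> 'a list) set" where
  "ed Lg p q w = {(u, v). length u = p \<and> length v = q \<and> u @ w @ v \<in> Lg}"
definition bV :: "'a list set \<Rightarrow> nat \<Rightarrow> nat \<Rightarrow> 'a list \<Rightarrow> ('a list + 'a list) set" where
  "bV Lg p q w = Inl ` lv Lg p w \<union> Inr ` rv Lg q w"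
definition bA :: "'a list set \<Rightarrow> nat \<Rightarrow> nat \<Rightarrow> 'a list \<Rightarrow> ('a list + 'a list) \<Rightarrow> ('a list + 'a list) \<Rightarrow> bool" where
  "bA Lg p q w x y \<longleftrightarrow> x \<in> bV Lg p q w \<and> y \<in> bV Lg p q w \<and>
     ((\<exists>u v. x = Inl u \<and> y = Inr v \<and> u @ w @ v \<in> Lg) \<or>
      (\<exists>u v. x = Inr v \<and> y = Inl u \<and> u @ w @ v \<in> Lg))"
definition bconn where "bconn Lg p q w = graph_connected (bV Lg p q w) (bA Lg p q w)"
definition btree where "btree Lg p q w = is_tree (bV Lg p q w) (bA Lg p q w)"
definition dl :: "'a list set \<Rightarrow> nat \<Rightarrow> nat \<Rightarrow> 'a list \<Rightarrow> int" where
  "dl Lg p q w = int (card (lv Lg p w)) + int (card (rv Lg q w)) - int (card (ed Lg p q w)) - 1"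

lemma fac_l: "factorial Lg \<Longrightarrow> u @ v \<in> Lg \<Longrightarrow> u \<in> Lg"
  unfolding factorial_def by blast
lemma fac_r: "factorial Lg \<Longrightarrow> u @ v \<in> Lg \<Longrightarrow> v \<in> Lg"
  unfolding factorial_def by blast

lemma ext_left: "extendable Lg \<Longrightarrow> w \<in> Lg \<Longrightarrow> \<exists>u. length u = k \<and> u @ w \<in> Lg"
proof (induction k)
  case 0 then show ?case by simp
next
  case (Suc k)
  then obtain u where "length u = k" "u @ w \<in> Lg" by blast
  moreover obtain a where "a # (u @ w) \<in> Lg" using Suc.prems(1) calculation(2) unfolding extendable_def by blast
  ultimately show ?case by (intro exI[of _ "a # u"]) simp
qed

lemma ext_right: "extendable Lg \<Longrightarrow> w \<in> Lg \<Longrightarrow> \<exists>v. length v = k \<and> w @ v \<in> Lg"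
proof (induction k)
  case 0 then show ?case by simp
next
  case (Suc k)
  then obtain v where "length v = k" "w @ v \<in> Lg" by blast
  moreover obtain a where "(w @ v) @ [a] \<in> Lg" using Suc.prems(1) calculation(2) unfolding extendable_def by blast
  ultimately show ?case by (intro exI[of _ "v @ [a]"]) simp
qed

lemma fin_len: "finite {u :: 'a::finite list. length u = p}"
  using finite_lists_length_eq[OF finite_UNIV, of p] by simp

lemma fin_lv: "finite (lv Lg p (w :: 'a::finite list))"
  by (rule finite_subset[OF _ fin_len[of p]]) (auto simp: lv_def)
lemma fin_rv: "finite (rv Lg q (w :: 'a::finite list))"
  by (rule finite_subset[OF _ fin_len[of q]]) (auto simp: rv_def)
lemma fin_ed: "finite (ed Lg p q (w :: 'a::finite list))"
  by (rule finite_subset[OF _ finite_cartesian_product[OF fin_len[of p] fin_len[of q]]]) (auto simp: ed_def)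
lemma fin_bV: "finite (bV Lg p q (w :: 'a::finite list))"
  by (simp add: bV_def fin_lv fin_rv)

lemma bA_wf: "bA Lg p q w x y \<Longrightarrow> x \<in> bV Lg p q w \<and> y \<in> bV Lg p q w"
  by (simp add: bA_def)
lemma bA_sym: "bA Lg p q w x y \<Longrightarrow> bA Lg p q w y x"
  unfolding bA_def by blast
lemma bA_irr: "\<not> bA Lg p q w x x"
  unfolding bA_def by auto

lemma Dg_b:
  assumes "factorial Lg"
  shows "Dg (bV Lg p q w) (bA Lg p q w) =
    (\<lambda>(u, v). (Inl u, Inr v)) ` ed Lg p q w \<union> (\<lambda>(u, v). (Inr v, Inl u)) ` ed Lg p q w"
proof -
  have m: "u @ w \<in> Lg" "w @ v \<in> Lg" if "u @ w @ v \<in> Lg" for u v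
    using fac_l[OF assms, of "u @ w" v] fac_r[OF assms, of u "w @ v"] that by auto
  show ?thesis
    unfolding Dg_def bA_def bV_def ed_def lv_def rv_def using m by (auto simp: image_iff)
qed

lemma card_Dg_b:
  assumes "factorial Lg"
  shows "card (Dg (bV Lg p q w) (bA Lg p q (w :: 'a::finite list))) = 2 * card (ed Lg p q w)"
proof -
  let ?f = "\<lambda>(u, v). (Inl u, Inr v) :: ('a list + 'a list) \<times> ('a list + 'a list)"
  let ?g = "\<lambda>(u, v). (Inr v, Inl u) :: ('a list + 'a list) \<times> ('a list + 'a list)"
  have "inj_on ?f (ed Lg p q w)" "inj_on ?g (ed Lg p q w)" by (auto intro!: inj_onI)
  moreover have "?f ` ed Lg p q w \<inter> ?g ` ed Lg p q w = {}" by auto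
  ultimately show ?thesis
    by (simp add: Dg_b[OF assms] card_Un_disjoint fin_ed card_image)
qed

lemma card_bV: "card (bV Lg p q (w :: 'a::finite list)) = card (lv Lg p w) + card (rv Lg q w)"
  unfolding bV_def
  by (subst card_Un_disjoint) (auto simp: fin_lv fin_rv card_image)

lemma btree_iff:
  fixes w :: "'a::finite list"
  assumes "factorial Lg"
  shows "btree Lg p q w \<longleftrightarrow> bV Lg p q w \<noteq> {} \<and> bconn Lg p q w \<and> dl Lg p q w = 0"
proof -
  have "card (Dg (bV Lg p q w) (bA Lg p q w)) + 2 = 2 * card (bV Lg p q w) \<longleftrightarrow> dl Lg p q w = 0"
    using card_Dg_b[OF assms, of p q w] card_bV[of Lg p q w] unfolding dl_def by linarith
  moreover have "btree Lg p q w \<longleftrightarrow> bV Lg p q w \<noteq> {} \<and> bconn Lg p q w \<and>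
     card (Dg (bV Lg p q w) (bA Lg p q w)) + 2 = 2 * card (bV Lg p q w)"
    unfolding btree_def bconn_def by (rule tree_iff[OF fin_bV bA_wf bA_sym bA_irr])
  ultimately show ?thesis by simp
qed

lemma bconn_dl:
  fixes w :: "'a::finite list"
  assumes "factorial Lg" "bV Lg p q w \<noteq> {}" "bconn Lg p q w"
  shows "dl Lg p q w \<le> 0"
  using conn_card[OF fin_bV assms(2) assms(3)[unfolded bconn_def] bA_sym]
    card_Dg_b[OF assms(1), of p q w] card_bV[of Lg p q w] unfolding dl_def by linarith

lemma bV_ne: "extendable Lg \<Longrightarrow> w \<in> Lg \<Longrightarrow> bV Lg p q w \<noteq> {}"
  using ext_left[of Lg w p] by (auto simp: bV_def lv_def)


lemma card_rv_split:
  fixes w :: "'a::finite list"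
  assumes fac: "factorial Lg"
  shows "card (rv Lg (q1 + q2) w) = (\<Sum>t\<in>rv Lg q1 w. card (rv Lg q2 (w @ t)))"
proof -
  have A: "(take q1 v, drop q1 v) \<in> Sigma (rv Lg q1 w) (\<lambda>t. rv Lg q2 (w @ t))"
    if v: "v \<in> rv Lg (q1 + q2) w" for v
  proof -
    have "(w @ take q1 v) @ drop q1 v \<in> Lg" using v by (simp add: rv_def)
    then have "w @ take q1 v \<in> Lg" by (rule fac_l[OF fac])
    then show ?thesis using v by (auto simp: rv_def)
  qed
  have "bij_betw (\<lambda>v. (take q1 v, drop q1 v)) (rv Lg (q1 + q2) w) (Sigma (rv Lg q1 w) (\<lambda>t. rv Lg q2 (w @ t)))"
    apply (rule bij_betw_byWitness[where f' = "\<lambda>(t, s). t @ s"])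
    subgoal by auto
    subgoal by (auto simp: rv_def)
    subgoal using A by auto
    subgoal by (auto simp: rv_def)
    done
  then have "card (rv Lg (q1 + q2) w) = card (Sigma (rv Lg q1 w) (\<lambda>t. rv Lg q2 (w @ t)))"
    by (rule bij_betw_same_card)
  also have "\<dots> = (\<Sum>t\<in>rv Lg q1 w. card (rv Lg q2 (w @ t)))"
    by (simp add: fin_rv)
  finally show ?thesis .
qed

lemma card_ed_split:
  fixes w :: "'a::finite list"
  assumes fac: "factorial Lg"
  shows "card (ed Lg p (q1 + q2) w) = (\<Sum>t\<in>rv Lg q1 w. card (ed Lg p q2 (w @ t)))"
proof -
  have A: "(take q1 v, (u, drop q1 v)) \<in> Sigma (rv Lg q1 w) (\<lambda>t. ed Lg p q2 (w @ t))"
    if uv: "(u, v) \<in> ed Lg p (q1 + q2) w" for u v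
  proof -
    have h: "u @ ((w @ take q1 v) @ drop q1 v) \<in> Lg" using uv by (simp add: ed_def)
    then have "w @ take q1 v \<in> Lg" using fac_l[OF fac] fac_r[OF fac] by blast
    then show ?thesis using uv h by (auto simp: rv_def ed_def)
  qed
  have "bij_betw (\<lambda>(u, v). (take q1 v, (u, drop q1 v))) (ed Lg p (q1 + q2) w)
          (Sigma (rv Lg q1 w) (\<lambda>t. ed Lg p q2 (w @ t)))"
    apply (rule bij_betw_byWitness[where f' = "\<lambda>(t, (u, s)). (u, t @ s)"])
    subgoal by auto
    subgoal by (auto simp: ed_def rv_def)
    subgoal using A by auto
    subgoal by (auto simp: rv_def ed_def)
    done
  then have "card (ed Lg p (q1 + q2) w) = card (Sigma (rv Lg q1 w) (\<lambda>t. ed Lg p q2 (w @ t)))"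
    by (rule bij_betw_same_card)
  also have "\<dots> = (\<Sum>t\<in>rv Lg q1 w. card (ed Lg p q2 (w @ t)))"
    by (simp add: fin_rv fin_ed)
  finally show ?thesis .
qed

lemma card_ed_lv:
  fixes w :: "'a::finite list"
  assumes fac: "factorial Lg"
  shows "card (ed Lg p q1 w) = (\<Sum>t\<in>rv Lg q1 w. card (lv Lg p (w @ t)))"
proof -
  have "bij_betw (\<lambda>(u, t). (t, u)) (ed Lg p q1 w) (Sigma (rv Lg q1 w) (\<lambda>t. lv Lg p (w @ t)))"
  proof (rule bij_betw_byWitness[where f' = "\<lambda>(t, u). (u, t)"])
    show "(\<lambda>(u, t). (t, u)) ` ed Lg p q1 w \<subseteq> Sigma (rv Lg q1 w) (\<lambda>t. lv Lg p (w @ t))"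
      using fac_r[OF fac] by (auto simp: rv_def ed_def lv_def)
    show "(\<lambda>(t, u). (u, t)) ` Sigma (rv Lg q1 w) (\<lambda>t. lv Lg p (w @ t)) \<subseteq> ed Lg p q1 w"
      by (auto simp: rv_def ed_def lv_def)
  qed auto
  then have "card (ed Lg p q1 w) = card (Sigma (rv Lg q1 w) (\<lambda>t. lv Lg p (w @ t)))"
    by (rule bij_betw_same_card)
  also have "\<dots> = (\<Sum>t\<in>rv Lg q1 w. card (lv Lg p (w @ t)))"
    by (simp add: fin_rv fin_lv)
  finally show ?thesis .
qed

lemma dl_split:
  fixes w :: "'a::finite list"
  assumes fac: "factorial Lg"
  shows "dl Lg p (q1 + q2) w = dl Lg p q1 w + (\<Sum>t\<in>rv Lg q1 w. dl Lg p q2 (w @ t))"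
proof -
  have "(\<Sum>t\<in>rv Lg q1 w. dl Lg p q2 (w @ t)) =
        (\<Sum>t\<in>rv Lg q1 w. int (card (lv Lg p (w @ t)))) + (\<Sum>t\<in>rv Lg q1 w. int (card (rv Lg q2 (w @ t))))
        - (\<Sum>t\<in>rv Lg q1 w. int (card (ed Lg p q2 (w @ t)))) - int (card (rv Lg q1 w))"
    by (simp add: dl_def sum.distrib sum_subtractf)
  also have "\<dots> = int (card (ed Lg p q1 w)) + int (card (rv Lg (q1 + q2) w))
        - int (card (ed Lg p (q1 + q2) w)) - int (card (rv Lg q1 w))"
    using card_ed_lv[OF fac, of p q1 w] card_rv_split[OF fac, of q1 q2 w] card_ed_split[OF fac, of p q1 q2 w]
    by (simp add: of_nat_sum)
  finally show ?thesis by (simp add: dl_def)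
qed


lemma gc_Dg: "graph_connected V E \<longleftrightarrow> (\<forall>p\<in>V. \<forall>q\<in>V. (p, q) \<in> (Dg V E)\<^sup>*)"
  by (simp add: graph_connected_def Dg_def)

lemma Dg_edge:
  assumes "factorial Lg" "length u = p" "length v = q" "u @ w @ v \<in> Lg"
  shows "(Inl u, Inr v) \<in> Dg (bV Lg p q w) (bA Lg p q w)"
    "(Inr v, Inl u) \<in> Dg (bV Lg p q w) (bA Lg p q w)"
  using assms by (auto simp: Dg_b ed_def image_iff)

lemma Dg_cases:
  assumes "factorial Lg" "(x, y) \<in> Dg (bV Lg p q w) (bA Lg p q w)"
  obtains u v where "length u = p" "length v = q" "u @ w @ v \<in> Lg"
    "(x = Inl u \<and> y = Inr v) \<or> (x = Inr v \<and> y = Inl u)"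
  using assms by (auto simp: Dg_b ed_def)

lemma bconn_proj:
  fixes Lg :: "'a list set"
  assumes fac: "factorial Lg" and ex: "extendable Lg" and con: "bconn Lg p q w" and le: "q' \<le> q"
  shows "bconn Lg p q' w"
proof -
  define g where "g = (case_sum Inl (\<lambda>v. Inr (take q' v)) :: 'a list + 'a list \<Rightarrow> 'a list + 'a list)"
  let ?G = "Dg (bV Lg p q w) (bA Lg p q w)" and ?H = "Dg (bV Lg p q' w) (bA Lg p q' w)"
  have hom: "(g x, g y) \<in> ?H\<^sup>*" if xy: "(x, y) \<in> ?G" for x y
  proof -
    obtain u v where uv: "length u = p" "length v = q" "u @ w @ v \<in> Lg"
      "(x = Inl u \<and> y = Inr v) \<or> (x = Inr v \<and> y = Inl u)"
      using Dg_cases[OF fac xy] by blast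
    have "(u @ w @ take q' v) @ drop q' v \<in> Lg" using uv(3) by simp
    then have "u @ w @ take q' v \<in> Lg" by (rule fac_l[OF fac])
    moreover have "length (take q' v) = q'" using uv(2) le by simp
    ultimately show ?thesis using Dg_edge[OF fac uv(1)] uv(4) by (auto simp: g_def)
  qed
  have pre: "\<exists>x'\<in>bV Lg p q w. g x' = x" if "x \<in> bV Lg p q' w" for x
  proof (cases x)
    case (Inl u)
    then show ?thesis using that by (intro bexI[of _ "Inl u"]) (auto simp: g_def bV_def)
  next
    case (Inr t)
    then have t: "length t = q'" "w @ t \<in> Lg" using that by (auto simp: bV_def rv_def)
    obtain s where s: "length s = q - q'" "(w @ t) @ s \<in> Lg" using ext_right[OF ex t(2)] by blast
    have "Inr (t @ s) \<in> bV Lg p q w" using s t le by (auto simp: bV_def rv_def)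
    moreover have "g (Inr (t @ s)) = x" using Inr t by (simp add: g_def)
    ultimately show ?thesis by blast
  qed
  show ?thesis
    unfolding bconn_def gc_Dg
  proof (intro ballI)
    fix x y assume "x \<in> bV Lg p q' w" "y \<in> bV Lg p q' w"
    then obtain x' y' where "x' \<in> bV Lg p q w" "y' \<in> bV Lg p q w" "g x' = x" "g y' = y"
      using pre by metis
    then have "(x', y') \<in> ?G\<^sup>*" using con unfolding bconn_def gc_Dg by blast
    from hom_rtrancl[where f = g, OF this hom] show "(x, y) \<in> ?H\<^sup>*" using \<open>g x' = x\<close> \<open>g y' = y\<close> by simp
  qed
qed

lemma bconn_glue:
  fixes Lg :: "'a list set"
  assumes fac: "factorial Lg" and ex: "extendable Lg" and con: "bconn Lg p q w"
    and cons: "\<And>t. t \<in> rv Lg q w \<Longrightarrow> bconn Lg p q2 (w @ t)"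
  shows "bconn Lg p (q + q2) w"
proof -
  let ?G = "Dg (bV Lg p (q + q2) w) (bA Lg p (q + q2) w)" and ?H = "Dg (bV Lg p q w) (bA Lg p q w)"
  let ?T = "\<lambda>t. Dg (bV Lg p q2 (w @ t)) (bA Lg p q2 (w @ t))"
  define f where "f t = (case_sum Inl (\<lambda>s. Inr (t @ s)) :: 'a list + 'a list \<Rightarrow> 'a list + 'a list)" for t
  have symG: "\<And>x y. (x, y) \<in> ?G \<Longrightarrow> (y, x) \<in> ?G" using bA_sym by (auto simp: Dg_def)
  have emb: "(f t x, f t y) \<in> ?G\<^sup>*" if t: "t \<in> rv Lg q w" and xy: "(x, y) \<in> (?T t)\<^sup>*" for t x y
  proof (rule hom_rtrancl[where f = "f t", OF xy])
    fix a b assume "(a, b) \<in> ?T t"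
    then obtain u s where us: "length u = p" "length s = q2" "u @ (w @ t) @ s \<in> Lg"
      "(a = Inl u \<and> b = Inr s) \<or> (a = Inr s \<and> b = Inl u)"
      using Dg_cases[OF fac] by metis
    have "length (t @ s) = q + q2" using us(2) t by (simp add: rv_def)
    moreover have "u @ w @ (t @ s) \<in> Lg" using us(3) by simp
    ultimately show "(f t a, f t b) \<in> ?G\<^sup>*" using Dg_edge[OF fac us(1)] us(4) by (auto simp: f_def)
  qed
  have Tcon: "(x, y) \<in> (?T t)\<^sup>*" if "t \<in> rv Lg q w" "x \<in> bV Lg p q2 (w @ t)" "y \<in> bV Lg p q2 (w @ t)" for t x y
    using cons[OF that(1)] that(2,3) unfolding bconn_def gc_Dg by blast
  have left: "(Inl u0, Inl u1) \<in> ?G\<^sup>*" if "u0 \<in> lv Lg p w" "u1 \<in> lv Lg p w" for u0 u1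
  proof -
    have h1: "(Inl u0, Inl u1) \<in> ?H\<^sup>*" using con that unfolding bconn_def gc_Dg bV_def by blast
    have h2: "(Inl u0, y) \<in> ?H\<^sup>* \<Longrightarrow> (case y of Inl u' \<Rightarrow> (Inl u0, Inl u') \<in> ?G\<^sup>*
        | Inr t \<Rightarrow> (\<forall>s\<in>rv Lg q2 (w @ t). (Inl u0, Inr (t @ s)) \<in> ?G\<^sup>*))" for y
    proof (induction rule: rtrancl_induct)
      case base then show ?case by simp
    next
      case (step y z)
      obtain u t where ut: "length u = p" "length t = q" "u @ w @ t \<in> Lg"
        "(y = Inl u \<and> z = Inr t) \<or> (y = Inr t \<and> z = Inl u)"
        using Dg_cases[OF fac step(2)] by blast
      have trv: "t \<in> rv Lg q w" using ut fac_r[OF fac, of u "w @ t"] by (simp add: rv_def)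
      have ulv: "Inl u \<in> bV Lg p q2 (w @ t)" using ut by (simp add: bV_def lv_def)
      from ut(4) show ?case
      proof
        assume yz: "y = Inl u \<and> z = Inr t"
        show ?case
        proof (simp add: yz, intro ballI)
          fix s assume s: "s \<in> rv Lg q2 (w @ t)"
          then have "Inr s \<in> bV Lg p q2 (w @ t)" by (simp add: bV_def)
          then have "(f t (Inl u), f t (Inr s)) \<in> ?G\<^sup>*" using emb[OF trv Tcon[OF trv ulv]] by blast
          moreover have "(Inl u0, Inl u) \<in> ?G\<^sup>*" using step(3) yz by simp
          ultimately show "(Inl u0, Inr (t @ s)) \<in> ?G\<^sup>*" by (simp add: f_def)
        qed
      next
        assume yz: "y = Inr t \<and> z = Inl u"
        have "w @ t \<in> Lg" using trv by (simp add: rv_def)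
        then obtain s where s: "length s = q2" "(w @ t) @ s \<in> Lg" using ext_right[OF ex] by blast
        then have sV: "Inr s \<in> bV Lg p q2 (w @ t)" by (simp add: bV_def rv_def)
        have "(Inl u0, Inr (t @ s)) \<in> ?G\<^sup>*" using step(3) yz s by (simp add: rv_def)
        moreover have "(f t (Inr s), f t (Inl u)) \<in> ?G\<^sup>*" using emb[OF trv Tcon[OF trv sV ulv]] by blast
        ultimately show ?case using yz by (simp add: f_def)
      qed
    qed
    from h2[OF h1] show ?thesis by simp
  qed
  have anchor: "\<exists>u\<in>lv Lg p w. (Inl u, x) \<in> ?G\<^sup>*" if "x \<in> bV Lg p (q + q2) w" for x
  proof (cases x)
    case (Inl u) then show ?thesis using that by (auto simp: bV_def)
  next
    case (Inr v)
    then have v: "length v = q + q2" "w @ v \<in> Lg" using that by (auto simp: bV_def rv_def)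
    obtain u where u: "length u = p" "u @ w @ v \<in> Lg" using ext_left[OF ex v(2)] by auto
    have "u \<in> lv Lg p w" using u fac_l[OF fac, of "u @ w" v] by (simp add: lv_def)
    moreover have "(Inl u, x) \<in> ?G" using Dg_edge[OF fac u(1) v(1) u(2)] Inr by simp
    ultimately show ?thesis by blast
  qed
  show ?thesis
    unfolding bconn_def gc_Dg
  proof (intro ballI)
    fix x y assume "x \<in> bV Lg p (q + q2) w" "y \<in> bV Lg p (q + q2) w"
    then obtain u1 u2 where "u1 \<in> lv Lg p w" "u2 \<in> lv Lg p w" "(Inl u1, x) \<in> ?G\<^sup>*" "(Inl u2, y) \<in> ?G\<^sup>*"
      using anchor by metis
    moreover have "(x, Inl u1) \<in> ?G\<^sup>*" using rtrancl_sym_rev[of ?G "Inl u1" x] symG calculation(3) by blast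
    ultimately show "(x, y) \<in> ?G\<^sup>*" using left by (meson rtrancl_trans)
  qed
qed


lemma tree_iso:
  assumes t: "is_tree V E" and inj: "inj_on f V" and img: "f ` V = V'"
    and wf': "\<And>x y. E' x y \<Longrightarrow> x \<in> V' \<and> y \<in> V'"
    and bk: "\<And>x y. x \<in> V \<Longrightarrow> y \<in> V \<Longrightarrow> E' (f x) (f y) \<Longrightarrow> E x y"
    and fwd: "\<And>x y. E x y \<Longrightarrow> E' (f x) (f y)"
  shows "is_tree V' E'"
proof -
  have ne: "V \<noteq> {}" and con: "graph_connected V E" and ac: "graph_acyclic V E"
    using t by (auto simp: is_tree_def)
  have "V' \<noteq> {}" using ne img by auto
  moreover have "graph_connected V' E'"
    unfolding gc_Dg
  proof (intro ballI)
    fix x' y' assume "x' \<in> V'" "y' \<in> V'"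
    then obtain x y where xy: "x \<in> V" "y \<in> V" "x' = f x" "y' = f y" using img by auto
    then have "(x, y) \<in> (Dg V E)\<^sup>*" using con unfolding gc_Dg by blast
    then have "(f x, f y) \<in> (Dg V' E')\<^sup>*"
    proof (rule hom_rtrancl[where f = f])
      fix a b assume "(a, b) \<in> Dg V E"
      then have "(f a, f b) \<in> Dg V' E'" using fwd img by (auto simp: Dg_def)
      then show "(f a, f b) \<in> (Dg V' E')\<^sup>*" by (rule r_into_rtrancl)
    qed
    then show "(x', y') \<in> (Dg V' E')\<^sup>*" using xy by simp
  qed
  moreover have "graph_acyclic V' E'"
    unfolding graph_acyclic_def
  proof
    assume "\<exists>cs. is_cycle V' E' cs"
    then obtain cs where cs: "is_cycle V' E' cs" by blast
    define g where "g = inv_into V f"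
    have sV: "set cs \<subseteq> V'" using cs by (simp add: is_cycle_def)
    have gV: "g y \<in> V" if "y \<in> V'" for y using that img unfolding g_def by (metis inv_into_into)
    have fg: "f (g y) = y" if "y \<in> V'" for y using that img unfolding g_def by (metis f_inv_into_f)
    have ginj: "inj_on g V'" using img unfolding g_def by (metis inj_on_inv_into subset_refl)
    have "is_cycle V E (map g cs)"
      unfolding is_cycle_def
    proof (intro conjI)
      show "3 \<le> length (map g cs)" using cs by (simp add: is_cycle_def)
      show "distinct (map g cs)" using cs ginj sV by (simp add: is_cycle_def distinct_map inj_on_subset)
      show "set (map g cs) \<subseteq> V" using gV sV by auto
      show "\<forall>i. Suc i < length (map g cs) \<longrightarrow> E (map g cs ! i) (map g cs ! Suc i)"
      proof (intro allI impI)
        fix i assume i: "Suc i < length (map g cs)"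
        have in1: "cs ! i \<in> V'" "cs ! Suc i \<in> V'" using i sV by auto
        have "E' (cs ! i) (cs ! Suc i)" using cs i by (simp add: is_cycle_def)
        then have "E' (f (g (cs ! i))) (f (g (cs ! Suc i)))" using fg in1 by simp
        then show "E (map g cs ! i) (map g cs ! Suc i)" using bk gV in1 i by simp
      qed
      have cne: "cs \<noteq> []" using cs by (auto simp: is_cycle_def)
      have lh: "last cs \<in> V'" "hd cs \<in> V'" using sV cne by auto
      have "E' (last cs) (hd cs)" using cs by (simp add: is_cycle_def)
      then have "E' (f (g (last cs))) (f (g (hd cs)))" using fg lh by simp
      then show "E (last (map g cs)) (hd (map g cs))" using bk gV lh cne
        by (simp add: last_map hd_map)
    qed
    then show False using ac by (auto simp: graph_acyclic_def)
  qed
  ultimately show ?thesis by (simp add: is_tree_def)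
qed

lemma mem_rev: "(x \<in> rev ` Lg) = (rev x \<in> Lg)"
  by (metis image_iff rev_rev_ident)

lemma btree_rev:
  fixes Lg :: "'a list set"
  assumes "btree Lg p q w"
  shows "btree (rev ` Lg) q p (rev w)"
proof -
  define phi where "phi = (case_sum (\<lambda>u. Inr (rev u)) (\<lambda>v. Inl (rev v)) :: 'a list + 'a list \<Rightarrow> 'a list + 'a list)"
  have lv': "lv (rev ` Lg) q (rev w) = rev ` rv Lg q w"
    by (rule set_eqI) (simp add: lv_def rv_def mem_rev)
  have rv': "rv (rev ` Lg) p (rev w) = rev ` lv Lg p w"
    by (rule set_eqI) (simp add: lv_def rv_def mem_rev)
  have i1: "phi ` Inl ` A = Inr ` rev ` A" for A
    by (simp add: image_image phi_def)
  have i2: "phi ` Inr ` A = Inl ` rev ` A" for A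
    by (simp add: image_image phi_def)
  have img: "phi ` bV Lg p q w = bV (rev ` Lg) q p (rev w)"
    unfolding bV_def lv' rv' image_Un i1 i2 by blast
  have inj: "inj_on phi (bV Lg p q w)"
    by (rule inj_onI) (auto simp: phi_def split: sum.splits)
  have memV: "phi x \<in> bV (rev ` Lg) q p (rev w) \<longleftrightarrow> x \<in> bV Lg p q w" for x
    by (cases x) (simp_all add: phi_def bV_def lv' rv' mem_rev image_iff)
  have edg: "(\<exists>u v. phi x = Inl u \<and> phi y = Inr v \<and> u @ rev w @ v \<in> rev ` Lg) \<or>
             (\<exists>u v. phi x = Inr v \<and> phi y = Inl u \<and> u @ rev w @ v \<in> rev ` Lg)
        \<longleftrightarrow> (\<exists>u v. x = Inl u \<and> y = Inr v \<and> u @ w @ v \<in> Lg) \<or>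
             (\<exists>u v. x = Inr v \<and> y = Inl u \<and> u @ w @ v \<in> Lg)" for x y
    by (cases x; cases y) (simp_all add: phi_def mem_rev)
  show ?thesis
    using assms unfolding btree_def
  proof (rule tree_iso[OF _ inj img])
    show "\<And>x y. bA (rev ` Lg) q p (rev w) x y \<Longrightarrow> x \<in> bV (rev ` Lg) q p (rev w) \<and> y \<in> bV (rev ` Lg) q p (rev w)"
      by (rule bA_wf)
    show "bA Lg p q w x y" if "x \<in> bV Lg p q w" "y \<in> bV Lg p q w" "bA (rev ` Lg) q p (rev w) (phi x) (phi y)" for x y
      using that(3) unfolding bA_def memV edg by simp
    show "bA (rev ` Lg) q p (rev w) (phi x) (phi y)" if "bA Lg p q w x y" for x y
      using that unfolding bA_def memV edg by simp
  qed
qed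



definition TT :: "'a list set \<Rightarrow> nat \<Rightarrow> nat \<Rightarrow> nat \<Rightarrow> bool" where
  "TT Lg m p q \<longleftrightarrow> (\<forall>w\<in>Lg. m \<le> length w \<longrightarrow> btree Lg p q w)"

lemma fac_rev: "factorial Lg \<Longrightarrow> factorial (rev ` Lg)"
  unfolding factorial_def mem_rev by (metis rev_append)

lemma ext_rev: "extendable Lg \<Longrightarrow> extendable (rev ` Lg)"
  unfolding extendable_def
proof (intro ballI conjI)
  fix w assume e: "\<forall>w\<in>Lg. (\<exists>a. a # w \<in> Lg) \<and> (\<exists>a. w @ [a] \<in> Lg)" and w: "w \<in> rev ` Lg"
  then have rw: "rev w \<in> Lg" by (simp add: mem_rev)
  obtain a where "rev w @ [a] \<in> Lg" using e rw by blast
  then show "\<exists>a. a # w \<in> rev ` Lg" by (intro exI[of _ a]) (simp add: mem_rev)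
  obtain b where "b # rev w \<in> Lg" using e rw by blast
  then show "\<exists>a. w @ [a] \<in> rev ` Lg" by (intro exI[of _ b]) (simp add: mem_rev)
qed

lemma rev_rev_img: "rev ` rev ` Lg = Lg"
  by (simp add: image_image)

lemma TT_rev: "TT Lg m p q \<Longrightarrow> TT (rev ` Lg) m q p"
  unfolding TT_def
proof (intro ballI impI)
  fix w assume h: "\<forall>w\<in>Lg. m \<le> length w \<longrightarrow> btree Lg p q w" and w: "w \<in> rev ` Lg" "m \<le> length w"
  then have "btree Lg p q (rev w)" by (simp add: mem_rev)
  from btree_rev[OF this] show "btree (rev ` Lg) q p w" by simp
qed

lemma TT_rev_iff: "TT (rev ` Lg) m q p \<longleftrightarrow> TT Lg m p q"
  using TT_rev[of Lg m p q] TT_rev[of "rev ` Lg" m q p] rev_rev_img[of Lg] by auto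

lemma R1:
  fixes Lg :: "'a::finite list set"
  assumes fac: "factorial Lg" and ex: "extendable Lg" and q: "1 \<le> q" and T: "TT Lg m p q"
  shows "TT Lg m p 1"
  unfolding TT_def
proof (intro ballI impI)
  fix w assume w: "w \<in> Lg" "m \<le> length w"
  define q' where "q' = q - 1"
  have qq: "q = 1 + q'" using q by (simp add: q'_def)
  have G: "btree Lg p q w" using T w by (simp add: TT_def)
  then have Gc: "bconn Lg p q w" and G0: "dl Lg p q w = 0" using btree_iff[OF fac] by auto
  have Hc: "bconn Lg p 1 w" using bconn_proj[OF fac ex Gc q] .
  have Hne: "bV Lg p 1 w \<noteq> {}" using bV_ne[OF ex w(1)] .
  have H: "dl Lg p 1 w \<le> 0" using bconn_dl[OF fac Hne Hc] .
  have S: "dl Lg p q' (w @ t) \<le> 0" if t: "t \<in> rv Lg 1 w" for t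
  proof -
    have wt: "w @ t \<in> Lg" "m \<le> length (w @ t)" using t w by (auto simp: rv_def)
    then have "btree Lg p q (w @ t)" using T by (simp add: TT_def)
    then have "bconn Lg p q (w @ t)" using btree_iff[OF fac] by auto
    then have "bconn Lg p q' (w @ t)" using bconn_proj[OF fac ex] qq by simp
    then show ?thesis using bconn_dl[OF fac bV_ne[OF ex wt(1)]] by blast
  qed
  have "dl Lg p q w = dl Lg p 1 w + (\<Sum>t\<in>rv Lg 1 w. dl Lg p q' (w @ t))"
    using dl_split[OF fac, of p 1 q' w] qq by simp
  moreover have "(\<Sum>t\<in>rv Lg 1 w. dl Lg p q' (w @ t)) \<le> 0" using S by (simp add: sum_nonpos)
  ultimately have "dl Lg p 1 w = 0" using G0 H by linarith
  then show "btree Lg p 1 w" using btree_iff[OF fac] Hc Hne by blast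
qed

lemma R2:
  fixes Lg :: "'a::finite list set"
  assumes fac: "factorial Lg" and ex: "extendable Lg" and T: "TT Lg m p 1"
  shows "1 \<le> q \<Longrightarrow> TT Lg m p q"
proof (induction q)
  case 0 then show ?case by simp
next
  case (Suc q)
  show ?case
  proof (cases "q = 0")
    case True then show ?thesis using T by simp
  next
    case False
    then have IH: "TT Lg m p q" using Suc.IH by simp
    show ?thesis
      unfolding TT_def
    proof (intro ballI impI)
      fix w assume w: "w \<in> Lg" "m \<le> length w"
      have H: "btree Lg p q w" using IH w by (simp add: TT_def)
      have Ts: "btree Lg p 1 (w @ t)" if "t \<in> rv Lg q w" for t
        using T that w by (auto simp: TT_def rv_def)
      have "bconn Lg p (q + 1) w"
        by (rule bconn_glue[OF fac ex]) (use H Ts btree_iff[OF fac] in auto)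
      moreover have "dl Lg p (q + 1) w = 0"
        using dl_split[OF fac, of p q 1 w] H Ts btree_iff[OF fac] by simp
      ultimately show "btree Lg p (Suc q) w"
        using btree_iff[OF fac] bV_ne[OF ex w(1)] by simp
    qed
  qed
qed

lemma factor_nth: "j < n \<Longrightarrow> factor x i n ! j = x (i + int j)"
  by (simp add: factor_def)

lemma lang_fac: "factorial (lang X)"
  unfolding factorial_def
proof (intro allI impI conjI)
  fix u v assume "u @ v \<in> lang X"
  then obtain x i where x: "x \<in> X" "u @ v = factor x i (length u + length v)"
    by (auto simp: lang_def)
  have "u = factor x i (length u)"
  proof (rule nth_equalityI)
    fix j assume "j < length u"
    then show "u ! j = factor x i (length u) ! j"
      using arg_cong[OF x(2), of "\<lambda>l. l ! j"] by (simp add: factor_nth nth_append)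
  qed (simp add: factor_def)
  then show "u \<in> lang X" using x(1) by (auto simp: lang_def)
  have "v = factor x (i + int (length u)) (length v)"
  proof (rule nth_equalityI)
    fix j assume "j < length v"
    then show "v ! j = factor x (i + int (length u)) (length v) ! j"
      using arg_cong[OF x(2), of "\<lambda>l. l ! (length u + j)"] by (simp add: factor_nth nth_append add.assoc)
  qed (simp add: factor_def)
  then show "v \<in> lang X" using x(1) by (auto simp: lang_def)
qed

lemma lang_ext: "extendable (lang X)"
  unfolding extendable_def
proof (intro ballI conjI)
  fix w assume "w \<in> lang X"
  then obtain x i where x: "x \<in> X" "w = factor x i (length w)" by (auto simp: lang_def)
  have "x (i - 1) # w = factor x (i - 1) (length (x (i - 1) # w))"
  proof (rule nth_equalityI)
    fix j assume j: "j < length (x (i - 1) # w)"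
    show "(x (i - 1) # w) ! j = factor x (i - 1) (length (x (i - 1) # w)) ! j"
    proof (cases j)
      case 0 then show ?thesis by (simp add: factor_nth)
    next
      case (Suc k)
      then have "k < length w" using j by simp
      then have "w ! k = x (i + int k)" using x(2) factor_nth by metis
      then show ?thesis using Suc j by (simp add: factor_nth)
    qed
  qed (simp add: factor_def)
  then show "\<exists>a. a # w \<in> lang X" using x(1) by (auto simp: lang_def)
  have "w @ [x (i + int (length w))] = factor x i (length (w @ [x (i + int (length w))]))"
  proof (rule nth_equalityI)
    fix j assume j: "j < length (w @ [x (i + int (length w))])"
    show "(w @ [x (i + int (length w))]) ! j = factor x i (length (w @ [x (i + int (length w))])) ! j"
    proof (cases "j < length w")
      case True
      then have "w ! j = x (i + int j)" using x(2) factor_nth by metis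
      then show ?thesis using True by (simp add: factor_nth nth_append)
    next
      case False
      then have "j = length w" using j by simp
      then show ?thesis by (simp add: factor_nth nth_append)
    qed
  qed (simp add: factor_def)
  then show "\<exists>a. w @ [a] \<in> lang X" using x(1) by (auto simp: lang_def)
qed

lemma ext_tree_eq: "ext_graph_is_tree X n w = btree (lang X) n n w"
proof -
  have l: "left_ext X n w = lv (lang X) n w"
    using fac_l[OF lang_fac] by (auto simp: left_ext_def lv_def lang_n_def)
  have r: "right_ext X n w = rv (lang X) n w"
    using fac_r[OF lang_fac] by (auto simp: right_ext_def rv_def lang_n_def)
  have v: "ext_vertices X n w = bV (lang X) n n w"
    by (simp add: ext_vertices_def bV_def l r)
  have a: "ext_adj X n w = bA (lang X) n n w"
    by (intro ext) (simp add: ext_adj_def bA_def v)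
  show ?thesis by (simp add: ext_graph_is_tree_def btree_def v a)
qed

theorem mainTheorem16:
  fixes X :: "(int \<Rightarrow> 'a::finite) set" and n m :: nat
  assumes "shift_space X" and "1 \<le> n"
  shows "(\<forall>w\<in>lang_ge X m. ext_graph_is_tree X n w) \<longleftrightarrow>
         (\<forall>w\<in>lang_ge X m. ext_graph_is_tree X (Suc n) w)"
proof -
  let ?L = "lang X" and ?L' = "rev ` lang X"
  have eq: "(\<forall>w\<in>lang_ge X m. ext_graph_is_tree X k w) \<longleftrightarrow> TT ?L m k k" for k
    by (auto simp: lang_ge_def TT_def ext_tree_eq)
  have f: "factorial ?L" "extendable ?L" by (rule lang_fac, rule lang_ext)
  have f': "factorial ?L'" "extendable ?L'" using fac_rev[OF f(1)] ext_rev[OF f(2)] by auto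
  have n1: "1 \<le> Suc n" by simp
  have fw: "TT ?L m (Suc n) (Suc n)" if h: "TT ?L m n n"
  proof -
    have "TT ?L m n 1" using R1[OF f assms(2) h] .
    then have "TT ?L m n (Suc n)" using R2[OF f] by simp
    then have "TT ?L' m (Suc n) n" using TT_rev_iff by blast
    then have "TT ?L' m (Suc n) 1" using R1[OF f' assms(2)] by blast
    then have "TT ?L' m (Suc n) (Suc n)" using R2[OF f'] by simp
    then show ?thesis using TT_rev_iff by blast
  qed
  have bw: "TT ?L m n n" if h: "TT ?L m (Suc n) (Suc n)"
  proof -
    have "TT ?L m (Suc n) 1" using R1[OF f n1 h] .
    then have "TT ?L m (Suc n) n" using R2[OF f] assms(2) by blast
    then have "TT ?L' m n (Suc n)" using TT_rev_iff by blast
    then have "TT ?L' m n 1" using R1[OF f' n1] by blast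
    then have "TT ?L' m n n" using R2[OF f'] assms(2) by blast
    then show ?thesis using TT_rev_iff by blast
  qed
  show ?thesis unfolding eq using fw bw by blast
qed


end
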